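(* Let $0\le k\le n$ and $\sigma\in\mathcal D^B_k$. Then $$\sum_{\pi\in B_n,\ dp(\pi)=\sigma}(-1)^{\ell_B(\pi)}q^{\mathrm{fmaj}(\pi)}=(-1)^{\ell_B(\sigma)}q^{\mathrm{fmaj}(\sigma)}{n\brack k}_{q^2}.$$
   Context: $B_n$ is the set of words $\sigma=\sigma_1\cdots\sigma_n$ with $\sigma_i\in\{\pm1,\dots,\pm n\}$ and $|\sigma_1|\cdots|\sigma_n|$ a permutation of $[n]$; $\mathcal D^B_k$ is the set of $\sigma\in B_k$ with $\sigma_i\ne i$ for all $i$ ($\mathcal D^B_0$ is the empty word). $\mathrm{inv}(\sigma)=\#\{(i,j):i<j,\sigma_i>\sigma_j\}$ (usual order), $\ell_B(\sigma)=\mathrm{inv}(\sigma)-\sum_{i:\sigma_i<0}\sigma_i$. Order $\prec$ on nonzero integers: $-1\prec-2\prec\cdots\prec-N\prec1\prec2\prec\cdots\prec N$. For a word $w$ of distinct nonzero integers, $\mathrm{maj}_\prec(w)=\sum_{i:w_i\succ w_{i+1}}i$, $\mathrm{neg}(w)$ = number of negative letters, $\mathrm{fmaj}(w)=2\mathrm{maj}_\prec(w)+\mathrm{neg}(w)$. For a word $w$ of nonzero integers whose absolute values are distinct, say $a_1<\dots<a_m$, its reduction replaces each letter $\pm a_j$ by $\pm j$ (keeping the sign). For $\pi\in B_n$, $dp(\pi)$ is the reduction of the subword of letters $\pi_i$ with $\pi_i\ne i$. $[m]_x=1+x+\dots+x^{m-1}$, $[m]_x!=[1]_x\cdots[m]_x$,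 $[0]_x!=1$, ${n\brack k}_x=\frac{[n]_x!}{[k]_x![n-k]_x!}$. *)

theory Defs
  imports "HOL-Computational_Algebra.Polynomial"
begin

text \<open>Signed permutations are represented as integer lists (words), 0-indexed in Isabelle,
  but the paper's position i corresponds to list index i-1.\<close>

definition Bn :: "nat \<Rightarrow> int list set" where
  "Bn n = {w. length w = n \<and> distinct (map abs w) \<and> set (map abs w) = {1..int n}}"

definition DB :: "nat \<Rightarrow> int list set" where
  "DB k = {w \<in> Bn k. \<forall>i<k. w ! i \<noteq> int (i + 1)}"

definition inv :: "int list \<Rightarrow> nat" where
  "inv w = card {(i, j). i < j \<and> j < length w \<and> w ! i > w ! j}"

text \<open>ell_B(w) = inv(w) - sum of negative letters = inv(w) + sum of their absolute values.\<close>
definition ellB :: "int list \<Rightarrow> nat" where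
  "ellB w = inv w + (\<Sum>i\<in>{i. i < length w \<and> w ! i < 0}. nat (- (w ! i)))"

text \<open>The order -1 < -2 < ... < -N < 1 < 2 < ... < N.\<close>
definition precB :: "int \<Rightarrow> int \<Rightarrow> bool" where
  "precB a b = ((a < 0 \<and> b > 0) \<or> (a < 0 \<and> b < 0 \<and> b < a) \<or> (a > 0 \<and> b > 0 \<and> a < b))"

text \<open>maj: sum of (1-based) positions i with w_i succ w_(i+1).\<close>
definition majB :: "int list \<Rightarrow> nat" where
  "majB w = (\<Sum>i\<in>{i. 1 \<le> i \<and> i < length w \<and> precB (w ! i) (w ! (i - 1))}. i)"

definition neg :: "int list \<Rightarrow> nat" where
  "neg w = length (filter (\<lambda>x. x < 0) w)"

definition fmaj :: "int list \<Rightarrow> nat" where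
  "fmaj w = 2 * majB w + neg w"

text \<open>Reduction: a letter \<plusminus>a_j (a_j the j-th smallest absolute value) becomes \<plusminus>j.\<close>
definition red :: "int list \<Rightarrow> int list" where
  "red w = map (\<lambda>x. sgn x * int (card {y \<in> set (map abs w). y \<le> abs x})) w"

definition dp :: "int list \<Rightarrow> int list" where
  "dp w = red (map fst (filter (\<lambda>(x, i). x \<noteq> int (i + 1)) (zip w [0..<length w])))"

definition qint :: "nat \<Rightarrow> 'a::comm_semiring_1 \<Rightarrow> 'a" where
  "qint m x = (\<Sum>i<m. x ^ i)"

definition qfact :: "nat \<Rightarrow> 'a::comm_semiring_1 \<Rightarrow> 'a" where
  "qfact m x = (\<Prod>i\<in>{1..m}. qint i x)"

definition qbinom :: "nat \<Rightarrow> nat \<Rightarrow> 'a::idom_divide \<Rightarrow> 'a" where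
  "qbinom n k x = qfact n x div (qfact k x * qfact (n - k) x)"

end

theory Submission
  imports Defs
begin

fun Gb :: "nat \<Rightarrow> nat \<Rightarrow> 'a::comm_ring_1 \<Rightarrow> 'a" where
  "Gb 0 m t = 1"
| "Gb (Suc a) 0 t = 1"
| "Gb (Suc a) (Suc m) t = Gb a (Suc m) t + t ^ Suc a * Gb (Suc a) m t"

lemma Gb_0_right[simp]: "Gb a 0 t = 1"
  by (cases a) auto

lemma qint_add: "qint (a + m) t = qint a t + t ^ a * qint m (t::'a::comm_semiring_1)"
  unfolding qint_def
proof (induction m)
  case 0 then show ?case by simp
next
  case (Suc m)
  have "(\<Sum>i<a + Suc m. t ^ i) = (\<Sum>i<a + m. t ^ i) + t ^ (a + m)" by simp
  also have "\<dots> = (\<Sum>i<a. t ^ i) + t ^ a * ((\<Sum>i<m. t ^ i) + t ^ m)"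
    using Suc by (simp add: algebra_simps power_add)
  finally show ?case by simp
qed

lemma qfact_Suc: "qfact (Suc m) t = qfact m t * qint (Suc m) t"
  unfolding qfact_def by (simp add: atLeastAtMostSuc_conv mult.commute)

lemma qfact_0[simp]: "qfact 0 t = 1" unfolding qfact_def by simp

lemma Gb_prod: "Gb a m t * qfact a t * qfact m t = qfact (a + m) t"
proof (induction a m t rule: Gb.induct)
  case (1 m t) then show ?case by simp
next
  case (2 a t) then show ?case by simp
next
  case (3 a m t)
  have e1: "qint (Suc a + Suc m) t = qint (Suc a) t + t ^ Suc a * qint (Suc m) t"
    by (rule qint_add)
  have "Gb (Suc a) (Suc m) t * qfact (Suc a) t * qfact (Suc m) t
      = (Gb a (Suc m) t * qfact a t * qfact (Suc m) t) * qint (Suc a) t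
        + t ^ Suc a * (Gb (Suc a) m t * qfact (Suc a) t * qfact m t) * qint (Suc m) t"
    by (simp add: qfact_Suc[of a] qfact_Suc[of m] algebra_simps)
  also have "\<dots> = qfact (a + Suc m) t * (qint (Suc a) t + t ^ Suc a * qint (Suc m) t)"
    using 3 by (simp add: algebra_simps)
  also have "\<dots> = qfact (Suc a + Suc m) t"
    using e1 qfact_Suc[of "a + Suc m" t] by simp
  finally show ?case .
qed

locale qnz =
  fixes t :: "'a::idom"
  assumes qf_nz: "qfact i t \<noteq> 0"
begin

lemma Gb_P2: "Gb (Suc a) (Suc m) t = Gb (Suc a) m t + t ^ Suc m * Gb a (Suc m) t"
proof -
  have nz: "qfact (Suc a) t * qfact (Suc m) t \<noteq> 0" using qf_nz by simp
  have "Gb (Suc a) (Suc m) t * (qfact (Suc a) t * qfact (Suc m) t) = qfact (Suc a + Suc m) t"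
    using Gb_prod[of "Suc a" "Suc m" t] by (simp add: mult.assoc)
  also have "\<dots> = qfact (Suc a + m) t * (qint (Suc m) t + t ^ Suc m * qint (Suc a) t)"
  proof -
    have h: "qint (Suc m + Suc a) t = qint (Suc m) t + t ^ Suc m * qint (Suc a) t" by (rule qint_add)
    have h2: "Suc (Suc a + m) = Suc m + Suc a" by simp
    have "qfact (Suc a + Suc m) t = qfact (Suc a + m) t * qint (Suc (Suc a + m)) t"
      using qfact_Suc[of "Suc a + m" t] by simp
    then show ?thesis using h h2 by (simp add: ac_simps)
  qed
  also have "\<dots> = (Gb (Suc a) m t * qfact (Suc a) t * qfact m t) * qint (Suc m) t
        + t ^ Suc m * (Gb a (Suc m) t * qfact a t * qfact (Suc m) t) * qint (Suc a) t"
    using Gb_prod[of "Suc a" m t] Gb_prod[of a "Suc m" t] by (simp add: algebra_simps)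
  also have "\<dots> = (Gb (Suc a) m t + t ^ Suc m * Gb a (Suc m) t) * (qfact (Suc a) t * qfact (Suc m) t)"
    by (simp add: qfact_Suc[of a] qfact_Suc[of m] algebra_simps)
  finally show ?thesis using nz by simp
qed

lemma Gb_rel: "(1 - t ^ Suc m) * Gb a (Suc m) t = (1 - t ^ (a + Suc m)) * Gb a m t"
proof -
  have nz: "qfact a t * qfact (Suc m) t \<noteq> 0" using qf_nz by simp
  have q1: "\<And>j. 1 - t ^ j = (1 - t) * qint j t"
    unfolding qint_def by (simp add: one_diff_power_eq)
  have "(1 - t ^ Suc m) * Gb a (Suc m) t * (qfact a t * qfact (Suc m) t)
        = (1 - t ^ Suc m) * qfact (a + Suc m) t"
    using Gb_prod[of a "Suc m" t] by (simp add: algebra_simps)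
  also have "\<dots> = (1 - t) * qint (Suc m) t * qint (Suc (a + m)) t * qfact (a + m) t"
  proof -
    have "qfact (a + Suc m) t = qfact (a+m) t * qint (Suc (a+m)) t" by (simp add: qfact_Suc)
    then show ?thesis unfolding q1[of "Suc m"] by (simp add: algebra_simps)
  qed
  also have "\<dots> = (1 - t ^ (a + Suc m)) * (Gb a m t * qfact a t * qfact m t) * qint (Suc m) t"
  proof -
    have "Suc (a + m) = a + Suc m" by simp
    then show ?thesis unfolding q1[of "a + Suc m"] Gb_prod[of a m t, symmetric] by (simp add: algebra_simps)
  qed
  also have "\<dots> = (1 - t ^ (a + Suc m)) * Gb a m t * (qfact a t * qfact (Suc m) t)"
    by (simp add: qfact_Suc[of m] algebra_simps)
  finally show ?thesis using nz by simp
qed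

end

lemma qbinom_Gb:
  assumes "k \<le> n" and nz: "qfact k t * qfact (n - k) t \<noteq> 0"
  shows "qbinom n k t = Gb k (n - k) (t::'a::idom_divide)"
  unfolding qbinom_def using Gb_prod[of k "n-k" t] assms
  by (metis le_add_diff_inverse mult.assoc nonzero_mult_div_cancel_right)

lemma qint_X2_nz: "i \<ge> 1 \<Longrightarrow> qint i (([:0,1:]::int poly)^2) \<noteq> 0"
proof
  assume "i \<ge> 1" "qint i (([:0,1:]::int poly)^2) = 0"
  then have "poly (qint i (([:0,1:]::int poly)^2)) 0 = 0" by simp
  moreover have "poly (qint i (([:0,1:]::int poly)^2)) 0 = 1"
  proof -
    have "poly (qint i (([:0,1:]::int poly)^2)) 0 = (\<Sum>j<i. (0::int) ^ (2*j))"
      unfolding qint_def by (simp add: poly_sum power_mult)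
    also have "\<dots> = (\<Sum>j\<in>{0}. (0::int) ^ (2*j))"
      using \<open>i \<ge> 1\<close> by (intro sum.mono_neutral_right) auto
    finally show ?thesis by simp
  qed
  ultimately show False by simp
qed

lemma qfact_X2_nz: "qfact i (([:0,1:]::int poly)^2) \<noteq> 0"
  unfolding qfact_def using qint_X2_nz by (simp add: prod_zero_iff)

interpretation X2: qnz "([:0,1:]::int poly)^2"
  by unfold_locales (rule qfact_X2_nz)

definition rk :: "bool list \<Rightarrow> nat \<Rightarrow> nat" where
  "rk b i = length (filter (\<lambda>x. \<not> b ! x) [0..<i])"

definition dl :: "(nat \<Rightarrow> bool) \<Rightarrow> (nat \<Rightarrow> bool) \<Rightarrow> bool list \<Rightarrow> nat \<Rightarrow> bool" where
  "dl e d b p = (if b ! (p - 1) then (if b ! p then False else \<not> e (rk b p))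
                 else (if b ! p then e (rk b (p - 1)) else d (rk b (p - 1))))"

definition Mabs :: "(nat \<Rightarrow> bool) \<Rightarrow> (nat \<Rightarrow> bool) \<Rightarrow> bool list \<Rightarrow> nat" where
  "Mabs e d b = (\<Sum>p\<in>{1..<length b}. if dl e d b p then p else 0)"

definition Bl :: "nat \<Rightarrow> nat \<Rightarrow> bool list set" where
  "Bl a m = {b. length b = a + m \<and> rk b (length b) = a}"

lemma rk_0[simp]: "rk b 0 = 0" by (simp add: rk_def)

lemma rk_Suc: "rk b (Suc i) = rk b i + (if b ! i then 0 else 1)"
  by (simp add: rk_def)

lemma rk_append: "i \<le> length b \<Longrightarrow> rk (b @ c) i = rk b i"
  unfolding rk_def by (intro arg_cong[where f=length] filter_cong) (auto simp: nth_append)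

lemma dl_append: "p < length b \<Longrightarrow> dl e d (b @ c) p = dl e d b p"
proof -
  assume p: "p < length b"
  then have "p - 1 < length b" by simp
  then show ?thesis unfolding dl_def using p by (simp add: nth_append rk_append)
qed

lemma rk_app_len[simp]: "rk (c @ zs) (length c) = rk c (length c)"
  by (rule rk_append) simp

lemma rk_app_len_Suc[simp]: "rk (c @ y # zs) (Suc (length c)) = rk c (length c) + (if y then 0 else 1)"
  using rk_Suc[of "c @ y # zs" "length c"] by simp

lemma Mabs_snoc: "Mabs e d (b @ [x]) = Mabs e d b + (if b \<noteq> [] \<and> dl e d (b @ [x]) (length b) then length b else 0)"
proof (cases "b = []")
  case True then show ?thesis by (simp add: Mabs_def)
next
  case False
  have "length b \<ge> 1" using False by (cases b) auto
  then have "{1..<length (b @ [x])} = insert (length b) {1..<length b}" by auto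
  then have "Mabs e d (b @ [x]) = (if dl e d (b @ [x]) (length b) then length b else 0)
      + (\<Sum>p\<in>{1..<length b}. if dl e d (b @ [x]) p then p else 0)"
    unfolding Mabs_def by simp
  also have "(\<Sum>p\<in>{1..<length b}. if dl e d (b @ [x]) p then p else 0) = Mabs e d b"
    unfolding Mabs_def by (intro sum.cong) (auto simp: dl_append)
  finally show ?thesis using False by simp
qed

lemma dl_last:
  assumes "b \<noteq> []"
  shows "dl e d (b @ [x]) (length b) = (if last b then (if x then False else \<not> e (rk b (length b)))
          else (if x then e (rk b (length b) - 1) else d (rk b (length b) - 1)))"
proof -
  obtain c y where b: "b = c @ [y]" using assms by (metis append_butlast_last_id)
  show ?thesis unfolding b dl_def by (cases x; cases y) (simp_all add: nth_append)
qed

lemma finite_Bl: "finite (Bl a m)"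
proof -
  have "Bl a m \<subseteq> {xs. set xs \<subseteq> UNIV \<and> length xs = a + m}" by (auto simp: Bl_def)
  then show ?thesis using finite_lists_length_eq[of "UNIV :: bool set" "a+m"] finite_subset by auto
qed

lemma rk_snoc: "rk (b @ [x]) (length (b @ [x])) = rk b (length b) + (if x then 0 else 1)"
  using rk_Suc[of "b @ [x]" "length b"] rk_append[of "length b" b "[x]"] by simp

lemma Bl_F: "{b \<in> Bl (Suc a) m. b \<noteq> [] \<and> \<not> last b} = (\<lambda>b. b @ [False]) ` Bl a m"
proof (intro set_eqI iffI)
  fix b assume "b \<in> {b \<in> Bl (Suc a) m. b \<noteq> [] \<and> \<not> last b}"
  then have b: "b \<in> Bl (Suc a) m" "b \<noteq> []" "\<not> last b" by auto
  then have eq: "b = butlast b @ [False]" by (metis append_butlast_last_id)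
  have "butlast b \<in> Bl a m" using b rk_snoc[of "butlast b" False] eq by (auto simp: Bl_def)
  then show "b \<in> (\<lambda>b. b @ [False]) ` Bl a m" using eq by blast
next
  fix b assume "b \<in> (\<lambda>b. b @ [False]) ` Bl a m"
  then show "b \<in> {b \<in> Bl (Suc a) m. b \<noteq> [] \<and> \<not> last b}"
    using rk_snoc by (auto simp: Bl_def)
qed

lemma Bl_T: "{b \<in> Bl a (Suc m). \<not> (b \<noteq> [] \<and> \<not> last b)} = (\<lambda>b. b @ [True]) ` Bl a m"
proof (intro set_eqI iffI)
  fix b assume "b \<in> {b \<in> Bl a (Suc m). \<not> (b \<noteq> [] \<and> \<not> last b)}"
  then have b: "b \<in> Bl a (Suc m)" "b \<noteq> []" "last b" by (auto simp: Bl_def)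
  then have eq: "b = butlast b @ [True]" by (metis append_butlast_last_id)
  have "butlast b \<in> Bl a m" using b rk_snoc[of "butlast b" True] eq by (auto simp: Bl_def)
  then show "b \<in> (\<lambda>b. b @ [True]) ` Bl a m" using eq by blast
next
  fix b assume "b \<in> (\<lambda>b. b @ [True]) ` Bl a m"
  then show "b \<in> {b \<in> Bl a (Suc m). \<not> (b \<noteq> [] \<and> \<not> last b)}"
    using rk_snoc by (auto simp: Bl_def)
qed

lemma rk_le: "rk b i \<le> i"
  unfolding rk_def using length_filter_le[of _ "[0..<i]"] by simp

lemma rk_full_False: "rk b (length b) = length b \<Longrightarrow> i < length b \<Longrightarrow> \<not> b ! i"
proof (induction b rule: rev_induct)
  case Nil then show ?case by simp
next
  case (snoc x xs)
  have "rk xs (length xs) \<le> length xs" by (rule rk_le)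
  then have x: "\<not> x" "rk xs (length xs) = length xs" using snoc.prems(1) rk_snoc[of xs x]
    by (auto split: if_splits)
  show ?case
  proof (cases "i < length xs")
    case True then show ?thesis using snoc.IH[OF x(2)] by (simp add: nth_append)
  next
    case False then show ?thesis using x snoc.prems by (simp add: nth_append)
  qed
qed

lemma Bl_F0: "{b \<in> Bl 0 m. b \<noteq> [] \<and> \<not> last b} = {}"
proof -
  { fix b assume b: "b \<in> Bl 0 m" "b \<noteq> []" "\<not> last b"
    then have eq: "b = butlast b @ [False]" by (metis append_butlast_last_id)
    have "rk b (length b) \<ge> 1" using rk_snoc[of "butlast b" False] eq by simp
    then have False using b by (simp add: Bl_def) }
  then show ?thesis by blast
qed

lemma Bl_T0: "{b \<in> Bl (Suc a) 0. \<not> (b \<noteq> [] \<and> \<not> last b)} = {}"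
proof -
  { fix b assume b: "b \<in> Bl (Suc a) 0" "\<not> (b \<noteq> [] \<and> \<not> last b)"
    then have "b \<noteq> []" "rk b (length b) = length b" by (auto simp: Bl_def)
    then have "\<not> last b" using rk_full_False[of b "length b - 1"] by (simp add: last_conv_nth)
    then have False using b \<open>b \<noteq> []\<close> by simp }
  then show ?thesis by blast
qed

lemma Bl_00: "Bl 0 0 = {[]}" by (auto simp: Bl_def)

lemma Bl_len: "b \<in> Bl a m \<Longrightarrow> length b = a + m" by (simp add: Bl_def)
lemma Bl_rk: "b \<in> Bl a m \<Longrightarrow> rk b (length b) = a" unfolding Bl_def by blast

lemma sum_split_P: "finite A \<Longrightarrow> sum f A = sum f {x\<in>A. P x} + sum f {x\<in>A. \<not> P x}"
proof -
  assume "finite A"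
  moreover have "A = {x\<in>A. P x} \<union> {x\<in>A. \<not> P x}" by auto
  ultimately show ?thesis by (metis (no_types, lifting) sum.union_disjoint finite_Un disjoint_iff mem_Collect_eq)
qed

context
  fixes e d :: "nat \<Rightarrow> bool" and t :: "'a::comm_ring_1"
begin

definition "UU a m = (\<Sum>b\<in>{b \<in> Bl a m. b \<noteq> [] \<and> \<not> last b}. t ^ Mabs e d b)"
definition "VV a m = (\<Sum>b\<in>{b \<in> Bl a m. \<not> (b \<noteq> [] \<and> \<not> last b)}. t ^ Mabs e d b)"

lemma SU_split: "(\<Sum>b\<in>Bl a m. t ^ Mabs e d b) = UU a m + VV a m"
  unfolding UU_def VV_def
  by (rule sum_split_P[OF finite_Bl])

lemma UU_0: "UU 0 m = 0" unfolding UU_def Bl_F0 by simp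
lemma VV_0: "VV (Suc a) 0 = 0" unfolding VV_def Bl_T0 by simp

lemma UU_Suc: "UU (Suc a) m = t ^ (if d (a - 1) then a + m else 0) * UU a m
                + t ^ (if \<not> e a then a + m else 0) * VV a m"
proof -
  have "UU (Suc a) m = (\<Sum>b\<in>Bl a m. t ^ Mabs e d (b @ [False]))"
    unfolding UU_def Bl_F by (subst sum.reindex) (auto simp: inj_on_def)
  also have "\<dots> = (\<Sum>b\<in>Bl a m. t ^ Mabs e d b * t ^ (if b \<noteq> [] \<and> dl e d (b @ [False]) (length b) then length b else 0))"
    by (simp add: Mabs_snoc power_add)
  also have "\<dots> = (\<Sum>b\<in>{b \<in> Bl a m. b \<noteq> [] \<and> \<not> last b}. t ^ Mabs e d b * t ^ (if b \<noteq> [] \<and> dl e d (b @ [False]) (length b) then length b else 0))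
     + (\<Sum>b\<in>{b \<in> Bl a m. \<not> (b \<noteq> [] \<and> \<not> last b)}. t ^ Mabs e d b * t ^ (if b \<noteq> [] \<and> dl e d (b @ [False]) (length b) then length b else 0))"
    by (rule sum_split_P[OF finite_Bl])
  also have "(\<Sum>b\<in>{b \<in> Bl a m. b \<noteq> [] \<and> \<not> last b}. t ^ Mabs e d b * t ^ (if b \<noteq> [] \<and> dl e d (b @ [False]) (length b) then length b else 0))
      = (\<Sum>b\<in>{b \<in> Bl a m. b \<noteq> [] \<and> \<not> last b}. t ^ Mabs e d b * t ^ (if d (a - 1) then a + m else 0))"
    by (intro sum.cong refl) (auto simp: dl_last Bl_def)
  also have "(\<Sum>b\<in>{b \<in> Bl a m. \<not> (b \<noteq> [] \<and> \<not> last b)}. t ^ Mabs e d b * t ^ (if b \<noteq> [] \<and> dl e d (b @ [False]) (length b) then length b else 0))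
      = (\<Sum>b\<in>{b \<in> Bl a m. \<not> (b \<noteq> [] \<and> \<not> last b)}. t ^ Mabs e d b * t ^ (if \<not> e a then a + m else 0))"
  proof (intro sum.cong refl)
    fix b assume b: "b \<in> {b \<in> Bl a m. \<not> (b \<noteq> [] \<and> \<not> last b)}"
    show "t ^ Mabs e d b * t ^ (if b \<noteq> [] \<and> dl e d (b @ [False]) (length b) then length b else 0) =
          t ^ Mabs e d b * t ^ (if \<not> e a then a + m else 0)"
    proof (cases "b = []")
      case True then show ?thesis using b by (simp add: Bl_def)
    next
      case False then show ?thesis using b dl_last[OF False] by (auto simp: Bl_def)
    qed
  qed
  finally show ?thesis unfolding UU_def VV_def sum_distrib_right[symmetric] by (simp add: mult.commute)
qed

lemma VV_Suc: "VV a (Suc m) = t ^ (if e (a - 1) then a + m else 0) * UU a m + VV a m"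
proof -
  have "VV a (Suc m) = (\<Sum>b\<in>Bl a m. t ^ Mabs e d (b @ [True]))"
    unfolding VV_def Bl_T by (subst sum.reindex) (auto simp: inj_on_def)
  also have "\<dots> = (\<Sum>b\<in>Bl a m. t ^ Mabs e d b * t ^ (if b \<noteq> [] \<and> dl e d (b @ [True]) (length b) then length b else 0))"
    by (simp add: Mabs_snoc power_add)
  also have "\<dots> = (\<Sum>b\<in>{b \<in> Bl a m. b \<noteq> [] \<and> \<not> last b}. t ^ Mabs e d b * t ^ (if b \<noteq> [] \<and> dl e d (b @ [True]) (length b) then length b else 0))
     + (\<Sum>b\<in>{b \<in> Bl a m. \<not> (b \<noteq> [] \<and> \<not> last b)}. t ^ Mabs e d b * t ^ (if b \<noteq> [] \<and> dl e d (b @ [True]) (length b) then length b else 0))"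
    by (rule sum_split_P[OF finite_Bl])
  also have "(\<Sum>b\<in>{b \<in> Bl a m. b \<noteq> [] \<and> \<not> last b}. t ^ Mabs e d b * t ^ (if b \<noteq> [] \<and> dl e d (b @ [True]) (length b) then length b else 0))
      = (\<Sum>b\<in>{b \<in> Bl a m. b \<noteq> [] \<and> \<not> last b}. t ^ Mabs e d b * t ^ (if e (a - 1) then a + m else 0))"
    by (intro sum.cong refl) (auto simp: dl_last Bl_def)
  also have "(\<Sum>b\<in>{b \<in> Bl a m. \<not> (b \<noteq> [] \<and> \<not> last b)}. t ^ Mabs e d b * t ^ (if b \<noteq> [] \<and> dl e d (b @ [True]) (length b) then length b else 0))
      = (\<Sum>b\<in>{b \<in> Bl a m. \<not> (b \<noteq> [] \<and> \<not> last b)}. t ^ Mabs e d b)"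
  proof (intro sum.cong refl)
    fix b assume b: "b \<in> {b \<in> Bl a m. \<not> (b \<noteq> [] \<and> \<not> last b)}"
    show "t ^ Mabs e d b * t ^ (if b \<noteq> [] \<and> dl e d (b @ [True]) (length b) then length b else 0) =
          t ^ Mabs e d b"
    proof (cases "b = []")
      case True then show ?thesis using b by (simp add: Bl_def)
    next
      case False then show ?thesis using b dl_last[OF False] by (auto simp: Bl_def)
    qed
  qed
  finally show ?thesis unfolding UU_def VV_def sum_distrib_right[symmetric] by (simp add: mult.commute)
qed

end

lemma Dd_Suc: "Mabs e d (replicate (Suc a) False) = Mabs e d (replicate a False) + (if a \<ge> 1 \<and> d (a - 1) then a else 0)"
proof -
  have r: "replicate (Suc a) False = replicate a False @ [False]" by (simp add: replicate_append_same)
  have rk: "rk (replicate a False) a = a"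
    unfolding rk_def by (subst filter_True) auto
  show ?thesis
  proof (cases a)
    case 0 then show ?thesis by (simp add: Mabs_def)
  next
    case (Suc a')
    then have "replicate a False \<noteq> []" "\<not> last (replicate a False)" by simp_all
    then show ?thesis unfolding r Mabs_snoc using dl_last[of "replicate a False" e d False] rk Suc
      by simp
  qed
qed

lemma pow_if_add: "(t::'a::comm_ring_1) ^ (if P then x + y else 0) = (if P then t^x * t^y else 1)"
  by (simp add: power_add)

context qnz
begin

lemma U_step_alg:
  assumes C1: "ex \<and> \<not> ey \<longrightarrow> dz" and C2: "\<not> ex \<and> ey \<longrightarrow> \<not> dz"
  shows "t ^ (if dz then Suc a + m else 0) * (t ^ (D + (if ex then 0 else m)) * Gb a m t)
     + t ^ (if \<not> ey then Suc a + m else 0) * (t ^ D * Gb (Suc a) m t - t ^ (D + (if ex then 0 else m)) * Gb a m t)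
     = t ^ (D + (if dz then Suc a else 0) + (if ey then 0 else m)) * Gb (Suc a) m t"
proof (cases m)
  case 0 then show ?thesis by (simp add: power_add mult.commute)
next
  case (Suc m')
  define A where "A = t ^ Suc a"
  define M where "M = t ^ Suc m'"
  define X where "X = Gb a (Suc m') t"
  define Y where "Y = Gb (Suc a) m' t"
  define G where "G = Gb (Suc a) (Suc m') t"
  define T where "T = t ^ D"
  have h1: "G = X + A * Y" unfolding G_def X_def A_def Y_def by simp
  have h2: "G = Y + M * X" unfolding G_def X_def M_def Y_def by (rule Gb_P2)
  have f1: "t ^ (if dz then Suc a + m else 0) = (if dz then A * M else 1)"
    unfolding A_def M_def Suc by (simp add: power_add)
  have f2: "t ^ (if \<not> ey then Suc a + m else 0) = (if \<not> ey then A * M else 1)"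
    unfolding A_def M_def Suc by (simp add: power_add)
  have f3: "t ^ (D + (if ex then 0 else m)) = T * (if ex then 1 else M)"
    unfolding T_def M_def Suc by (simp add: power_add)
  have f4: "t ^ (D + (if dz then Suc a else 0) + (if ey then 0 else m)) = T * (if dz then A else 1) * (if ey then 1 else M)"
    unfolding T_def A_def M_def Suc by (simp add: power_add)
  have f5: "Gb a m t = X" "Gb (Suc a) m t = G" "t ^ D = T" unfolding X_def G_def T_def Suc by simp_all
  show ?thesis
    unfolding f1 f2 f3 f4 f5
    using C1 C2 h1 h2 
    apply (cases ex; cases ey; cases dz)
    apply (simp_all add: algebra_simps)
    apply algebra+
    done
qed

lemma S_step_alg:
  "t ^ (D + (if ex then 0 else Suc m)) * Gb a (Suc m) t
   + (t ^ (if ex then Suc a + m else 0) * (t ^ (D + (if ex then 0 else m)) * Gb a m t)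
      + (t ^ D * Gb (Suc a) m t - t ^ (D + (if ex then 0 else m)) * Gb a m t))
   = t ^ D * Gb (Suc a) (Suc m) t"
proof (cases ex)
  case True
  have r: "(1 - t ^ Suc m) * Gb a (Suc m) t = (1 - t ^ (a + Suc m)) * Gb a m t" by (rule Gb_rel)
  have p: "Gb (Suc a) (Suc m) t = Gb (Suc a) m t + t ^ Suc m * Gb a (Suc m) t" by (rule Gb_P2)
  define X where "X = Gb a (Suc m) t"
  define W where "W = Gb a m t"
  define Y where "Y = Gb (Suc a) m t"
  define G where "G = Gb (Suc a) (Suc m) t"
  define T where "T = t ^ D"
  define L where "L = t ^ (a + Suc m)"
  define M where "M = t ^ Suc m"
  have e: "t ^ (Suc a + m) = L" "t ^ (D + 0) = T" "t ^ D = T" unfolding L_def T_def by simp_all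
  from r p have r': "(1 - M) * X = (1 - L) * W" "G = Y + M * X"
    unfolding X_def W_def Y_def G_def M_def L_def by simp_all
  have "T * X + (L * (T * W) + (T * Y - T * W)) = T * G" using r' by algebra
  then show ?thesis using True unfolding X_def W_def Y_def G_def T_def L_def by simp
next
  case False
  have p: "Gb (Suc a) (Suc m) t = Gb (Suc a) m t + t ^ Suc m * Gb a (Suc m) t" by (rule Gb_P2)
  then show ?thesis using False by (simp add: algebra_simps power_add)
qed

lemma VV_00: "VV e d t 0 0 = 1"
proof -
  have "{b \<in> Bl 0 0. \<not> (b \<noteq> [] \<and> \<not> last b)} = {[]}" using Bl_00 by auto
  then show ?thesis unfolding VV_def by (simp add: Mabs_def)
qed

lemma Mabs_rep1: "Mabs e d (replicate (Suc 0) False) = 0" by (simp add: Mabs_def)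

lemma closed_forms:
  assumes C1: "\<forall>j. e j \<and> \<not> e (Suc j) \<longrightarrow> d j" and C2: "\<forall>j. \<not> e j \<and> e (Suc j) \<longrightarrow> \<not> d j"
  shows "\<forall>a. UU e d t a m = (if a = 0 then 0 else t ^ (Mabs e d (replicate a False) + (if e (a - 1) then 0 else m)) * Gb (a - 1) m t)
           \<and> UU e d t a m + VV e d t a m = t ^ Mabs e d (replicate a False) * Gb a m t"
proof (induction m)
  case 0
  show ?case
  proof
    fix a show "UU e d t a 0 = (if a = 0 then 0 else t ^ (Mabs e d (replicate a False) + (if e (a - 1) then 0 else 0)) * Gb (a - 1) 0 t)
           \<and> UU e d t a 0 + VV e d t a 0 = t ^ Mabs e d (replicate a False) * Gb a 0 t"
    proof (induction a)
      case 0 then show ?case by (simp add: UU_0 VV_00 Mabs_def)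
    next
      case (Suc a)
      have U: "UU e d t (Suc a) 0 = t ^ Mabs e d (replicate (Suc a) False)"
      proof (cases a)
        case 0
        then show ?thesis using Suc.IH by (simp add: UU_Suc UU_0 Mabs_def)
      next
        case (Suc a')
        have h1: "UU e d t (Suc a') 0 = t ^ Mabs e d (replicate (Suc a') False)"
          using Suc.IH Suc by simp
        have h2: "VV e d t (Suc a') 0 = 0" by (rule VV_0)
        show ?thesis unfolding Suc UU_Suc[of e d t "Suc a'" 0] h1 h2 using Dd_Suc[of e d "Suc a'"]
          by (simp add: power_add mult.commute)
      qed
      then show ?case by (simp add: VV_0)
    qed
  qed
next
  case (Suc m)
  have OIH: "\<And>a. UU e d t a m = (if a = 0 then 0 else t ^ (Mabs e d (replicate a False) + (if e (a - 1) then 0 else m)) * Gb (a - 1) m t)"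
     "\<And>a. UU e d t a m + VV e d t a m = t ^ Mabs e d (replicate a False) * Gb a m t"
    using Suc.IH by blast+
  show ?case
  proof
    fix a show "UU e d t a (Suc m) = (if a = 0 then 0 else t ^ (Mabs e d (replicate a False) + (if e (a - 1) then 0 else Suc m)) * Gb (a - 1) (Suc m) t)
           \<and> UU e d t a (Suc m) + VV e d t a (Suc m) = t ^ Mabs e d (replicate a False) * Gb a (Suc m) t"
    proof (induction a)
      case 0
      have "VV e d t 0 m = 1" using OIH(2)[of 0] by (simp add: UU_0 Mabs_def)
      then show ?case by (simp add: UU_0 VV_Suc Mabs_def)
    next
      case (Suc a)
      have IH1: "UU e d t a (Suc m) = (if a = 0 then 0 else t ^ (Mabs e d (replicate a False) + (if e (a - 1) then 0 else Suc m)) * Gb (a - 1) (Suc m) t)"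
        and IH2: "UU e d t a (Suc m) + VV e d t a (Suc m) = t ^ Mabs e d (replicate a False) * Gb a (Suc m) t"
        using Suc.IH by blast+
      have V: "VV e d t a (Suc m) = t ^ Mabs e d (replicate a False) * Gb a (Suc m) t - UU e d t a (Suc m)"
        using IH2 by (simp add: algebra_simps)
      have U: "UU e d t (Suc a) (Suc m) = t ^ (Mabs e d (replicate (Suc a) False) + (if e a then 0 else Suc m)) * Gb a (Suc m) t"
      proof (cases a)
        case 0
        then show ?thesis using IH1 V by (simp add: UU_Suc Mabs_def)
      next
        case (Suc a')
        have i1: "UU e d t (Suc a') (Suc m) = t ^ (Mabs e d (replicate (Suc a') False) + (if e a' then 0 else Suc m)) * Gb a' (Suc m) t"
          using IH1 Suc by simp
        have i2: "VV e d t (Suc a') (Suc m) = t ^ Mabs e d (replicate (Suc a') False) * Gb (Suc a') (Suc m) t - UU e d t (Suc a') (Suc m)"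
          using V Suc by simp
        have dd: "Mabs e d (replicate (Suc (Suc a')) False) = Mabs e d (replicate (Suc a') False) + (if d a' then Suc a' else 0)"
          using Dd_Suc[of e d "Suc a'"] by simp
        show ?thesis unfolding Suc UU_Suc[of e d t "Suc a'" "Suc m"] i2 unfolding i1 dd
          using U_step_alg[where ex="e a'" and ey="e (Suc a')" and dz="d a'" and D="Mabs e d (replicate (Suc a') False)" and a=a' and m="Suc m"] C1 C2
          by simp
      qed
      have VS: "VV e d t (Suc a) (Suc m) = t ^ (if e a then Suc a + m else 0) * UU e d t (Suc a) m + VV e d t (Suc a) m"
        using VV_Suc[of e d t "Suc a" m] by simp
      have o1: "UU e d t (Suc a) m = t ^ (Mabs e d (replicate (Suc a) False) + (if e a then 0 else m)) * Gb a m t"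
        using OIH(1)[of "Suc a"] by simp
      have o2: "VV e d t (Suc a) m = t ^ Mabs e d (replicate (Suc a) False) * Gb (Suc a) m t - UU e d t (Suc a) m"
        using OIH(2)[of "Suc a"] by (simp add: algebra_simps)
      have S: "UU e d t (Suc a) (Suc m) + VV e d t (Suc a) (Suc m) = t ^ Mabs e d (replicate (Suc a) False) * Gb (Suc a) (Suc m) t"
        unfolding VS o2 unfolding U o1
        by (rule S_step_alg)
      show ?case using U S by simp
    qed
  qed
qed

theorem main_sum:
  assumes C1: "\<forall>j. e j \<and> \<not> e (Suc j) \<longrightarrow> d j" and C2: "\<forall>j. \<not> e j \<and> e (Suc j) \<longrightarrow> \<not> d j"
  shows "(\<Sum>b\<in>Bl a m. t ^ Mabs e d b) = t ^ Mabs e d (replicate a False) * Gb a m t"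
  using closed_forms[OF C1 C2, of m] SU_split by metis

end

definition nf :: "bool list \<Rightarrow> nat list" where
  "nf b = filter (\<lambda>i. \<not> b ! i) [0..<length b]"

lemma nf_len: "length (nf b) = rk b (length b)"
  by (simp add: nf_def rk_def)

lemma nf_set: "set (nf b) = {i. i < length b \<and> \<not> b ! i}"
  by (auto simp: nf_def)

lemma nf_sorted: "sorted_wrt (<) (nf b)"
  unfolding nf_def by (rule sorted_wrt_filter) (rule sorted_wrt_upt)

lemma nf_less: "j1 < j2 \<Longrightarrow> j2 < length (nf b) \<Longrightarrow> nf b ! j1 < nf b ! j2"
  using sorted_wrt_nth_less[OF nf_sorted] by blast

lemma nf_less_iff: "j1 < length (nf b) \<Longrightarrow> j2 < length (nf b) \<Longrightarrow> nf b ! j1 < nf b ! j2 \<longleftrightarrow> j1 < j2"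
  by (metis nf_less not_less_iff_gr_or_eq order.asym)

lemma nf_le_iff: "j1 < length (nf b) \<Longrightarrow> j2 < length (nf b) \<Longrightarrow> nf b ! j1 \<le> nf b ! j2 \<longleftrightarrow> j1 \<le> j2"
  by (metis nf_less_iff not_less)

lemma nf_eq_iff: "j1 < length (nf b) \<Longrightarrow> j2 < length (nf b) \<Longrightarrow> nf b ! j1 = nf b ! j2 \<longleftrightarrow> j1 = j2"
  by (metis nf_less_iff not_less_iff_gr_or_eq)

lemma nf_elem: "j < length (nf b) \<Longrightarrow> nf b ! j < length b \<and> \<not> b ! (nf b ! j)"
  using nth_mem[of j "nf b"] nf_set by blast

lemma nf_rk:
  assumes "i < length b" "\<not> b ! i"
  shows "rk b i < length (nf b) \<and> nf b ! rk b i = i"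
proof -
  have "[0..<length b] = [0..<i] @ i # [Suc i..<length b]"
    using assms(1) by (metis le_add_diff_inverse less_imp_le_nat upt_add_eq_append upt_conv_Cons zero_le)
  then have "nf b = filter (\<lambda>i. \<not> b ! i) [0..<i] @ i # filter (\<lambda>i. \<not> b ! i) [Suc i..<length b]"
    unfolding nf_def using assms(2) by simp
  then show ?thesis unfolding rk_def by (simp add: nth_append)
qed

lemma rk_nf: "j < length (nf b) \<Longrightarrow> rk b (nf b ! j) = j"
  using nf_rk[of "nf b ! j" b] nf_elem[of j b] nf_eq_iff[of "rk b (nf b ! j)" b j] by auto

lemma rk_mono: "i \<le> i' \<Longrightarrow> rk b i \<le> rk b i'"
proof (induction i' rule: dec_induct)
  case base then show ?case by simp
next
  case (step i') then show ?case by (simp add: rk_Suc)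
qed

definition phi :: "bool list \<Rightarrow> int \<Rightarrow> int" where
  "phi b v = sgn v * (int (nf b ! (nat \<bar>v\<bar> - 1)) + 1)"

definition build :: "int list \<Rightarrow> bool list \<Rightarrow> int list" where
  "build s b = map (\<lambda>i. if b ! i then int i + 1 else phi b (s ! rk b i)) [0..<length b]"

definition fm :: "int list \<Rightarrow> bool list" where
  "fm w = map (\<lambda>i. w ! i = int i + 1) [0..<length w]"

lemma dp_filter: "dp w = red (map (nth w) (filter (\<lambda>i. w ! i \<noteq> int i + 1) [0..<length w]))"
proof -
  have z: "zip w [0..<length w] = map (\<lambda>i. (w ! i, i)) [0..<length w]"
    by (rule nth_equalityI) auto
  show ?thesis unfolding dp_def z by (simp add: filter_map o_def ac_simps)
qed

lemma int_nat_m1: "1 \<le> (x::int) \<Longrightarrow> int (nat x - 1) + 1 = x" by (simp add: of_nat_diff)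

lemma card_le_nf:
  assumes "c0 < length (nf b)"
  shows "card {y \<in> (\<lambda>c. int (nf b ! c) + 1) ` {..<length (nf b)}. y \<le> int (nf b ! c0) + 1} = Suc c0"
proof -
  have "{y \<in> (\<lambda>c. int (nf b ! c) + 1) ` {..<length (nf b)}. y \<le> int (nf b ! c0) + 1}
        = (\<lambda>c. int (nf b ! c) + 1) ` {..c0}"
    using assms nf_le_iff[of _ b c0] by (auto simp: image_iff)
  moreover have "inj_on (\<lambda>c. int (nf b ! c) + 1) {..c0}"
    using assms nf_eq_iff[of _ b] by (auto simp: inj_on_def)
  ultimately show ?thesis by (simp add: card_image)
qed

locale setting =
  fixes s :: "int list" and k n :: nat and b :: "bool list"
  assumes sig: "s \<in> DB k" and bl: "b \<in> Bl k (n - k)" and kn: "k \<le> n"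
begin

lemma lenb: "length b = n" using bl kn unfolding Bl_def by auto
lemma lennf: "length (nf b) = k" using bl kn unfolding Bl_def nf_len by auto
lemma lens: "length s = k" using sig by (simp add: DB_def Bn_def)

lemma s_abs: "j < k \<Longrightarrow> 1 \<le> \<bar>s ! j\<bar> \<and> \<bar>s ! j\<bar> \<le> int k"
proof -
  assume j: "j < k"
  have "\<bar>s ! j\<bar> \<in> set (map abs s)" using j lens nth_mem[of j s] by auto
  then show ?thesis using sig by (simp add: DB_def Bn_def)
qed

lemma s_ne: "j < k \<Longrightarrow> s ! j \<noteq> int j + 1" using sig unfolding DB_def by (simp add: add.commute)

lemma s_inj: "j1 < k \<Longrightarrow> j2 < k \<Longrightarrow> \<bar>s ! j1\<bar> = \<bar>s ! j2\<bar> \<Longrightarrow> j1 = j2"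
  using sig lens unfolding DB_def Bn_def by (auto simp: distinct_conv_nth)

definition c :: "nat \<Rightarrow> nat" where "c j = nat \<bar>s ! j\<bar> - 1"

lemma c_lt: "j < k \<Longrightarrow> c j < k" using s_abs[of j] unfolding c_def by linarith

lemma c_abs: "j < k \<Longrightarrow> \<bar>s ! j\<bar> = int (c j) + 1" using s_abs[of j] int_nat_m1 unfolding c_def by metis

lemma c_inj: "j1 < k \<Longrightarrow> j2 < k \<Longrightarrow> c j1 = c j2 \<Longrightarrow> j1 = j2"
  using c_abs s_inj by metis

lemma c_bij: "bij_betw c {..<k} {..<k}"
proof -
  have "inj_on c {..<k}" using c_inj by (auto simp: inj_on_def)
  moreover have "c ` {..<k} \<subseteq> {..<k}" using c_lt by auto
  ultimately show ?thesis by (simp add: bij_betw_def endo_inj_surj)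
qed

lemma s_nz: "j < k \<Longrightarrow> s ! j \<noteq> 0" using s_abs[of j] by auto

lemma phi_s: "j < k \<Longrightarrow> phi b (s ! j) = (if s ! j > 0 then int (nf b ! c j) + 1 else - (int (nf b ! c j) + 1))"
  using s_nz[of j] by (auto simp: phi_def c_def sgn_if)

lemma phi_abs: "j < k \<Longrightarrow> \<bar>phi b (s ! j)\<bar> = int (nf b ! c j) + 1"
  using phi_s by auto

lemma phi_pos: "j < k \<Longrightarrow> phi b (s ! j) > 0 \<longleftrightarrow> s ! j > 0"
  using phi_s by auto

abbreviation "p \<equiv> build s b"

lemma len_p: "length p = n" by (simp add: build_def lenb)

lemma p_F: "i < n \<Longrightarrow> b ! i \<Longrightarrow> p ! i = int i + 1"
  by (simp add: build_def lenb)

lemma p_N: "i < n \<Longrightarrow> \<not> b ! i \<Longrightarrow> p ! i = phi b (s ! rk b i) \<and> rk b i < k \<and> nf b ! rk b i = i"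
  using nf_rk[of i b] lenb lennf by (simp add: build_def)

lemma p_nf: "j < k \<Longrightarrow> p ! (nf b ! j) = phi b (s ! j)"
  using nf_elem[of j b] p_N[of "nf b ! j"] rk_nf[of j b] lennf lenb by auto

lemma fixed_iff: "i < n \<Longrightarrow> p ! i = int i + 1 \<longleftrightarrow> b ! i"
proof
  assume i: "i < n" and eq: "p ! i = int i + 1"
  show "b ! i"
  proof (rule ccontr)
    assume nb: "\<not> b ! i"
    define j where "j = rk b i"
    have j: "j < k" "nf b ! j = i" "p ! i = phi b (s ! j)" using p_N[OF i nb] j_def by auto
    then have pos: "s ! j > 0" and v: "int (nf b ! c j) + 1 = int i + 1"
      using eq phi_s[OF j(1)] by (auto split: if_splits)
    then have "nf b ! c j = nf b ! j" using j by simp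
    then have "c j = j" using nf_eq_iff[of "c j" b j] c_lt[OF j(1)] j(1) lennf by simp
    then have "s ! j = int j + 1" using c_abs[OF j(1)] pos by simp
    then show False using s_ne[OF j(1)] by simp
  qed
next
  assume "i < n" "b ! i" then show "p ! i = int i + 1" by (rule p_F)
qed

lemma fm_p: "fm p = b"
  by (rule nth_equalityI) (auto simp: fm_def len_p lenb fixed_iff)

lemma absp: "i < n \<Longrightarrow> \<bar>p ! i\<bar> = (if b ! i then int i + 1 else int (nf b ! c (rk b i)) + 1)"
  using p_F p_N phi_abs by auto

lemma p_in_Bn: "p \<in> Bn n"
proof -
  define g where "g i = \<bar>p ! i\<bar>" for i
  have mp: "map abs p = map g [0..<n]" by (rule nth_equalityI) (auto simp: len_p g_def)
  have inj: "inj_on g {0..<n}"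
  proof (rule inj_onI)
    fix i i' assume i: "i \<in> {0..<n}" and i': "i' \<in> {0..<n}" and eq: "g i = g i'"
    show "i = i'"
    proof (cases "b ! i"; cases "b ! i'")
      assume "b ! i" "b ! i'" then show ?thesis using eq i i' by (simp add: g_def absp)
    next
      assume a: "b ! i" "\<not> b ! i'"
      then have "nf b ! c (rk b i') = i" using eq i i' by (simp add: g_def absp)
      moreover have "\<not> b ! (nf b ! c (rk b i'))" using nf_elem c_lt p_N a i' lennf by simp
      ultimately show ?thesis using a by simp
    next
      assume a: "\<not> b ! i" "b ! i'"
      then have "nf b ! c (rk b i) = i'" using eq i i' by (simp add: g_def absp)
      moreover have "\<not> b ! (nf b ! c (rk b i))" using nf_elem c_lt p_N a i lennf by simp
      ultimately show ?thesis using a by simp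
    next
      assume a: "\<not> b ! i" "\<not> b ! i'"
      then have "nf b ! c (rk b i) = nf b ! c (rk b i')" using eq i i' by (simp add: g_def absp)
      then have "c (rk b i) = c (rk b i')" using nf_eq_iff c_lt p_N a i i' lennf by simp
      then have "rk b i = rk b i'" using c_inj p_N a i i' by simp
      moreover have "nf b ! rk b i = i" "nf b ! rk b i' = i'" using p_N[of i] p_N[of i'] a i i' by auto
      ultimately show ?thesis by metis
    qed
  qed
  have sub: "g ` {0..<n} \<subseteq> {1..int n}"
  proof
    fix y assume "y \<in> g ` {0..<n}"
    then obtain i where i: "i < n" "y = g i" by auto
    show "y \<in> {1..int n}"
    proof (cases "b ! i")
      case True then show ?thesis using i by (simp add: g_def absp)
    next
      case False
      then have "nf b ! c (rk b i) < n" using nf_elem c_lt p_N i lennf lenb by auto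
      then show ?thesis using i False by (simp add: g_def absp)
    qed
  qed
  have "card (g ` {0..<n}) = card {1..int n}" using inj by (simp add: card_image)
  then have "g ` {0..<n} = {1..int n}" using sub by (intro card_subset_eq) auto
  then have s1: "set (map abs p) = {1..int n}" unfolding mp by simp
  have s2: "distinct (map abs p)" unfolding mp using inj by (simp add: distinct_map)
  show ?thesis unfolding Bn_def using s1 s2 len_p by blast
qed

lemma nfixed_list: "filter (\<lambda>i. p ! i \<noteq> int i + 1) [0..<length p] = nf b"
  unfolding nf_def len_p lenb by (intro filter_cong) (auto simp: fixed_iff)

lemma map_p_nf: "map (nth p) (nf b) = map (phi b) s"
  by (rule nth_equalityI) (auto simp: lennf lens p_nf)

lemma red_phi: "red (map (phi b) s) = s"
proof (rule nth_equalityI)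
  show "length (red (map (phi b) s)) = length s" by (simp add: red_def)
next
  fix j assume "j < length (red (map (phi b) s))"
  then have j: "j < k" by (simp add: red_def lens)
  have S: "set (map abs (map (phi b) s)) = (\<lambda>c. int (nf b ! c) + 1) ` {..<length (nf b)}"
  proof -
    have "set (map abs (map (phi b) s)) = (\<lambda>x. \<bar>phi b x\<bar>) ` set s" by auto
    also have "\<dots> = (\<lambda>x. \<bar>phi b x\<bar>) ` (nth s ` {..<k})" using nth_image[of k s] lens by (simp add: atLeast0LessThan)
    also have "\<dots> = (\<lambda>j. \<bar>phi b (s ! j)\<bar>) ` {..<k}" by (simp add: image_image)
    finally have "set (map abs (map (phi b) s)) = (\<lambda>j. \<bar>phi b (s ! j)\<bar>) ` {..<k}" .
    also have "\<dots> = (\<lambda>cc. int (nf b ! cc) + 1) ` (c ` {..<k})"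
      using phi_abs by (auto simp: image_iff)
    also have "\<dots> = (\<lambda>cc. int (nf b ! cc) + 1) ` {..<length (nf b)}"
      using c_bij lennf by (simp add: bij_betw_def)
    finally show ?thesis .
  qed
  have "red (map (phi b) s) ! j = sgn (phi b (s ! j)) * int (Suc (c j))"
    unfolding red_def using j lens S phi_abs[OF j] card_le_nf[of "c j" b] c_lt[OF j] lennf
    by simp
  also have "\<dots> = s ! j" using c_abs[OF j] phi_s[OF j] s_nz[OF j]
    by (auto simp: sgn_if)
  finally show "red (map (phi b) s) ! j = s ! j" .
qed

lemma dp_p: "dp p = s"
  unfolding dp_filter nfixed_list map_p_nf red_phi ..

end

lemma surj_build:
  assumes sig: "s \<in> DB k" and kn: "k \<le> n" and pB: "q \<in> Bn n" and dq: "dp q = s"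
  shows "fm q \<in> Bl k (n - k) \<and> build s (fm q) = q"
proof -
  define b where "b = fm q"
  have lq: "length q = n" using pB by (simp add: Bn_def)
  have lb: "length b = n" by (simp add: b_def fm_def lq)
  have bi: "\<And>i. i < n \<Longrightarrow> b ! i \<longleftrightarrow> q ! i = int i + 1" by (simp add: b_def fm_def lq)
  have fl: "filter (\<lambda>i. q ! i \<noteq> int i + 1) [0..<length q] = nf b"
    unfolding nf_def lb lq by (intro filter_cong) (auto simp: bi)
  define u where "u = map (nth q) (nf b)"
  have ru: "red u = s" using dq unfolding dp_filter fl u_def .
  have lens: "length s = k" using sig by (simp add: DB_def Bn_def)
  have "length (red u) = length (nf b)" unfolding red_def u_def by simp
  then have lnf: "length (nf b) = k" using ru lens by simp
  have bl: "b \<in> Bl k (n - k)" using lnf lb kn by (simp add: Bl_def nf_len)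
  interpret setting s k n b using sig bl kn by unfold_locales
  have dq_abs: "distinct (map abs q)" and sq_abs: "set (map abs q) = {1..int n}" using pB by (auto simp: Bn_def)
  have qinj: "\<And>i i'. i < n \<Longrightarrow> i' < n \<Longrightarrow> \<bar>q ! i\<bar> = \<bar>q ! i'\<bar> \<Longrightarrow> i = i'"
    using dq_abs lq by (auto simp: distinct_conv_nth)
  have qrange: "\<And>i. i < n \<Longrightarrow> 1 \<le> \<bar>q ! i\<bar> \<and> \<bar>q ! i\<bar> \<le> int n"
  proof -
    fix i assume "i < n"
    then have "\<bar>q ! i\<bar> \<in> set (map abs q)" using lq nth_mem[of i q] by auto
    then show "1 \<le> \<bar>q ! i\<bar> \<and> \<bar>q ! i\<bar> \<le> int n" using sq_abs by auto
  qed
  define S where "S = (\<lambda>cc. int (nf b ! cc) + 1) ` {..<length (nf b)}"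
  have inS: "\<And>i. i < n \<Longrightarrow> \<not> b ! i \<Longrightarrow> \<exists>c0 < k. \<bar>q ! i\<bar> = int (nf b ! c0) + 1"
  proof -
    fix i assume i: "i < n" and nb: "\<not> b ! i"
    define v where "v = nat \<bar>q ! i\<bar> - 1"
    have v: "v < n" "int v + 1 = \<bar>q ! i\<bar>" using qrange[OF i] int_nat_m1 unfolding v_def by (linarith, metis)
    have "\<not> b ! v"
    proof
      assume "b ! v"
      then have "q ! v = int v + 1" using bi v by simp
      then have "\<bar>q ! v\<bar> = \<bar>q ! i\<bar>" using v by simp
      then have "v = i" using qinj v i by simp
      then show False using nb \<open>b ! v\<close> by simp
    qed
    then have "v \<in> set (nf b)" using v lb nf_set by auto
    then obtain c0 where "c0 < length (nf b)" "nf b ! c0 = v" by (metis in_set_conv_nth)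
    then show "\<exists>c0 < k. \<bar>q ! i\<bar> = int (nf b ! c0) + 1" using v lnf by auto
  qed
  have setu: "set (map abs u) = S"
  proof (rule card_subset_eq)
    show "finite S" by (simp add: S_def)
    show "set (map abs u) \<subseteq> S"
    proof
      fix y assume "y \<in> set (map abs u)"
      then obtain i where i: "i \<in> set (nf b)" "y = \<bar>q ! i\<bar>" by (auto simp: u_def)
      then have "i < n" "\<not> b ! i" using nf_set lb by auto
      then show "y \<in> S" using inS i lnf by (auto simp: S_def)
    qed
    have "distinct (map abs u)" unfolding u_def map_map
    proof (subst distinct_map, intro conjI)
      show "distinct (nf b)" by (simp add: nf_def)
      show "inj_on (abs \<circ> (!) q) (set (nf b))" using qinj nf_set lb by (auto simp: inj_on_def)
    qed
    then have "card (set (map abs u)) = length (map abs u)" by (rule distinct_card)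
    then have "card (set (map abs u)) = k" using lnf by (simp add: u_def)
    moreover have "card S = k" unfolding S_def using lnf nf_eq_iff[of _ b]
      by (subst card_image) (auto simp: inj_on_def)
    ultimately show "card (set (map abs u)) = card S" by simp
  qed
  have "build s b = q"
  proof (rule nth_equalityI)
    show "length (build s b) = length q" using len_p lq by simp
  next
    fix i assume "i < length (build s b)"
    then have i: "i < n" using len_p by simp
    show "build s b ! i = q ! i"
    proof (cases "b ! i")
      case True then show ?thesis using p_F[OF i] bi[OF i] by simp
    next
      case False
      define j where "j = rk b i"
      have j: "j < k" "nf b ! j = i" "build s b ! i = phi b (s ! j)" using p_N[OF i False] j_def by auto
      obtain c0 where c0: "c0 < k" "\<bar>q ! i\<bar> = int (nf b ! c0) + 1" using inS[OF i False] by blast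
      have uj: "u ! j = q ! i" using j lnf by (simp add: u_def)
      have "s ! j = red u ! j" using ru by simp
      also have "\<dots> = sgn (q ! i) * int (card {y \<in> S. y \<le> \<bar>q ! i\<bar>})"
        unfolding red_def using j lnf uj setu by (simp add: u_def)
      also have "\<dots> = sgn (q ! i) * int (Suc c0)" using card_le_nf[of c0 b] c0 lnf unfolding S_def by simp
      finally have sj: "s ! j = sgn (q ! i) * int (Suc c0)" .
      have qnz: "q ! i \<noteq> 0" using qrange[OF i] by auto
      have "\<bar>s ! j\<bar> = int (Suc c0)" using sj qnz by (simp add: abs_mult abs_sgn_eq)
      then have cj: "c j = c0" unfolding c_def by simp
      have "phi b (s ! j) = sgn (s ! j) * (int (nf b ! c0) + 1)" using cj unfolding phi_def c_def by simp
      also have "\<dots> = sgn (q ! i) * \<bar>q ! i\<bar>" using sj c0 by (simp add: sgn_mult)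
      also have "\<dots> = q ! i" by (rule sgn_mult_abs)
      finally show ?thesis using j by simp
    qed
  qed
  then show ?thesis using bl b_def by simp
qed

lemma majB_sum: "majB w = (\<Sum>i\<in>{1..<length w}. if precB (w ! i) (w ! (i - 1)) then i else 0)"
proof -
  have "{i. 1 \<le> i \<and> i < length w \<and> precB (w ! i) (w ! (i - 1))} = {i \<in> {1..<length w}. precB (w ! i) (w ! (i - 1))}"
    by auto
  then show ?thesis unfolding majB_def using sum.inter_filter[of "{1..<length w}" "\<lambda>i. i" "\<lambda>i. precB (w ! i) (w ! (i - 1))"]
    by simp
qed

lemma precB_abs: "a \<noteq> 0 \<Longrightarrow> b \<noteq> 0 \<Longrightarrow> precB a b \<longleftrightarrow> (a < 0 \<and> b > 0) \<or> (a < 0 \<and> b < 0 \<and> \<bar>a\<bar> < \<bar>b\<bar>) \<or> (a > 0 \<and> b > 0 \<and> \<bar>a\<bar> < \<bar>b\<bar>)"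
  unfolding precB_def by auto

lemma rk_rep: "i \<le> k \<Longrightarrow> rk (replicate k False) i = i"
  unfolding rk_def by (subst filter_True) auto

context setting
begin

definition ee :: "nat \<Rightarrow> bool" where "ee j = (j < k \<and> s ! j > int j + 1)"
definition dd :: "nat \<Rightarrow> bool" where "dd j = (if Suc j < k then precB (s ! Suc j) (s ! j) else ee j)"

lemma C1: "\<forall>j. ee j \<and> \<not> ee (Suc j) \<longrightarrow> dd j"
proof (intro allI impI)
  fix j assume a: "ee j \<and> \<not> ee (Suc j)"
  show "dd j"
  proof (cases "Suc j < k")
    case True
    then have "s ! Suc j \<le> int (Suc j) + 1" using a by (simp add: ee_def)
    moreover have "s ! Suc j \<noteq> int (Suc j) + 1" using s_ne[OF True] .
    moreover have "s ! j > int j + 1" using a by (simp add: ee_def)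
    moreover have "s ! Suc j \<noteq> 0" using s_nz[OF True] .
    ultimately show ?thesis using True unfolding dd_def precB_def by auto
  next
    case False then show ?thesis using a by (simp add: dd_def)
  qed
qed

lemma C2: "\<forall>j. \<not> ee j \<and> ee (Suc j) \<longrightarrow> \<not> dd j"
proof (intro allI impI)
  fix j assume a: "\<not> ee j \<and> ee (Suc j)"
  then have sk: "Suc j < k" by (simp add: ee_def)
  then have "s ! Suc j > int (Suc j) + 1" using a by (simp add: ee_def)
  moreover have "\<not> s ! j > int j + 1" using a sk by (simp add: ee_def)
  moreover have "s ! j \<noteq> int j + 1" using s_ne sk by simp
  ultimately show "\<not> dd j" using sk unfolding dd_def precB_def by auto
qed

lemma abs_phi_less: "j1 < k \<Longrightarrow> j2 < k \<Longrightarrow> \<bar>phi b (s ! j1)\<bar> < \<bar>phi b (s ! j2)\<bar> \<longleftrightarrow> \<bar>s ! j1\<bar> < \<bar>s ! j2\<bar>"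
proof -
  assume j: "j1 < k" "j2 < k"
  have "\<bar>phi b (s ! j1)\<bar> < \<bar>phi b (s ! j2)\<bar> \<longleftrightarrow> nf b ! c j1 < nf b ! c j2"
    using phi_abs[OF j(1)] phi_abs[OF j(2)] by auto
  also have "\<dots> \<longleftrightarrow> c j1 < c j2" using nf_less_iff[of "c j1" b "c j2"] c_lt j lennf by simp
  also have "\<dots> \<longleftrightarrow> \<bar>s ! j1\<bar> < \<bar>s ! j2\<bar>" using c_abs[OF j(1)] c_abs[OF j(2)] by auto
  finally show ?thesis .
qed

lemma phi_nz: "j < k \<Longrightarrow> phi b (s ! j) \<noteq> 0" using phi_abs by fastforce

lemma phi_neg: "j < k \<Longrightarrow> phi b (s ! j) < 0 \<longleftrightarrow> s ! j < 0"
  using phi_pos phi_nz s_nz by (meson linorder_neqE_linordered_idom not_less_iff_gr_or_eq)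

lemma step_TF:
  assumes i1: "1 \<le> i" and i: "i < n" and ii: "i = Suc i'" and a: "b ! i'" "\<not> b ! i"
  shows "precB (p ! i) (p ! i') \<longleftrightarrow> dl ee dd b i"
proof -
  have i': "i' < n" using ii i by simp
  define j where "j = rk b i"
  have j: "j < k" "nf b ! j = i" "p ! i = phi b (s ! j)" using p_N[OF i a(2)] j_def by auto
  have pi': "p ! i' = int i" using p_F[OF i' a(1)] ii by simp
  have dl: "dl ee dd b i = (\<not> ee j)" unfolding dl_def using a ii j_def by simp
  have "precB (phi b (s ! j)) (int i) \<longleftrightarrow> \<not> (s ! j > int j + 1)"
  proof (cases "s ! j > 0")
    case False
    then have "s ! j < 0" using s_nz[OF j(1)] by simp
    then show ?thesis using phi_neg[OF j(1)] i1 unfolding precB_def by auto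
  next
    case True
    have pv: "phi b (s ! j) = int (nf b ! c j) + 1" using phi_s[OF j(1)] True by simp
    have sv: "s ! j = int (c j) + 1" using c_abs[OF j(1)] True by simp
    have cne: "c j \<noteq> j" using s_ne[OF j(1)] sv by auto
    have nfc: "nf b ! c j \<noteq> i'" using nf_elem[of "c j" b] c_lt[OF j(1)] lennf a(1) by auto
    have "c j < j \<longleftrightarrow> nf b ! c j < i" using nf_less_iff[of "c j" b j] c_lt[OF j(1)] j lennf by simp
    then show ?thesis unfolding pv precB_def using sv cne nfc ii by auto
  qed
  then show ?thesis using dl j pi' by (simp add: ee_def)
qed

lemma step_FT:
  assumes i1: "1 \<le> i" and i: "i < n" and ii: "i = Suc i'" and a: "\<not> b ! i'" "b ! i"
  shows "precB (p ! i) (p ! i') \<longleftrightarrow> dl ee dd b i"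
proof -
  have i': "i' < n" using ii i by simp
  define j where "j = rk b i'"
  have j: "j < k" "nf b ! j = i'" "p ! i' = phi b (s ! j)" using p_N[OF i' a(1)] j_def by auto
  have pi: "p ! i = int i + 1" using p_F[OF i a(2)] by simp
  have dl: "dl ee dd b i = ee j" unfolding dl_def using a ii j_def by simp
  have "precB (int i + 1) (phi b (s ! j)) \<longleftrightarrow> (s ! j > int j + 1)"
  proof (cases "s ! j > 0")
    case False
    then have "s ! j < 0" using s_nz[OF j(1)] by simp
    then show ?thesis using phi_neg[OF j(1)] unfolding precB_def by auto
  next
    case True
    have pv: "phi b (s ! j) = int (nf b ! c j) + 1" using phi_s[OF j(1)] True by simp
    have sv: "s ! j = int (c j) + 1" using c_abs[OF j(1)] True by simp
    have nfc: "nf b ! c j \<noteq> i" using nf_elem[of "c j" b] c_lt[OF j(1)] lennf a(2) by auto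
    have "j < c j \<longleftrightarrow> i' < nf b ! c j" using nf_less_iff[of j b "c j"] c_lt[OF j(1)] j lennf by simp
    then show ?thesis unfolding pv precB_def using sv nfc ii by auto
  qed
  then show ?thesis using dl j pi by (simp add: ee_def)
qed

lemma step_FF:
  assumes i1: "1 \<le> i" and i: "i < n" and ii: "i = Suc i'" and a: "\<not> b ! i'" "\<not> b ! i"
  shows "precB (p ! i) (p ! i') \<longleftrightarrow> dl ee dd b i"
proof -
  have i': "i' < n" using ii i by simp
  define j where "j = rk b i'"
  have j: "j < k" "nf b ! j = i'" "p ! i' = phi b (s ! j)" using p_N[OF i' a(1)] j_def by auto
  have j1: "rk b i = Suc j" using rk_Suc[of b i'] ii a j_def by simp
  have j2: "Suc j < k" "p ! i = phi b (s ! Suc j)" using p_N[OF i a(2)] j1 by auto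
  have dl: "dl ee dd b i = precB (s ! Suc j) (s ! j)" unfolding dl_def using a ii j_def j1 j2
    by (simp add: dd_def)
  have "precB (phi b (s ! Suc j)) (phi b (s ! j)) \<longleftrightarrow> precB (s ! Suc j) (s ! j)"
    using precB_abs[OF phi_nz[OF j2(1)] phi_nz[OF j(1)]] precB_abs[OF s_nz[OF j2(1)] s_nz[OF j(1)]]
      phi_neg[OF j(1)] phi_neg[OF j2(1)] phi_pos[OF j(1)] phi_pos[OF j2(1)] abs_phi_less[OF j2(1) j(1)]
    by (simp only:)
  then show ?thesis using dl j j2 by simp
qed

lemma step_TT:
  assumes i1: "1 \<le> i" and i: "i < n" and ii: "i = Suc i'" and a: "b ! i'" "b ! i"
  shows "precB (p ! i) (p ! i') \<longleftrightarrow> dl ee dd b i"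
proof -
  have i': "i' < n" using ii i by simp
  have "p ! i' = int i' + 1" "p ! i = int i + 1" using p_F[OF i' a(1)] p_F[OF i a(2)] by auto
  moreover have "dl ee dd b i = False" unfolding dl_def using a ii by simp
  ultimately show ?thesis using ii unfolding precB_def by simp
qed

lemma step_eq:
  assumes i1: "1 \<le> i" and i: "i < n"
  shows "precB (p ! i) (p ! (i - 1)) \<longleftrightarrow> dl ee dd b i"
proof -
  obtain i' where ii: "i = Suc i'" using i1 by (cases i) auto
  then have "i - 1 = i'" by simp
  then show ?thesis using step_TT[OF i1 i ii] step_TF[OF i1 i ii] step_FT[OF i1 i ii] step_FF[OF i1 i ii] by blast
qed

lemma maj_p: "majB p = Mabs ee dd b"
  unfolding majB_sum Mabs_def len_p lenb using step_eq by (intro sum.cong) auto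

lemma maj_s: "majB s = Mabs ee dd (replicate k False)"
  unfolding majB_sum Mabs_def lens length_replicate
proof (intro sum.cong refl)
  fix i assume i: "i \<in> {1..<k}"
  then have "dl ee dd (replicate k False) i = precB (s ! i) (s ! (i - 1))"
  proof -
    have i1: "1 \<le> i" "i < k" using i by auto
    have r: "rk (replicate k False) (i - 1) = i - 1" using rk_rep[of "i - 1" k] i1 by simp
    have r2: "Suc (i - 1) = i" using i1 by simp
    show ?thesis unfolding dl_def using i1 r r2 by (simp add: dd_def)
  qed
  then show "(if precB (s ! i) (s ! (i - 1)) then i else 0) = (if dl ee dd (replicate k False) i then i else 0)"
    by simp
qed

end

lemma card_filter_sum: "finite A \<Longrightarrow> card {x \<in> A. Q x} = (\<Sum>x\<in>A. if Q x then 1 else 0)"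
  by (simp add: sum.inter_filter[symmetric])

lemma card_pairs: "card {(i, j). i < j \<and> j < (m::nat) \<and> P i j} = (\<Sum>i<m. \<Sum>j<m. if i < j \<and> P i j then 1 else 0)"
proof -
  have "{(i, j). i < j \<and> j < m \<and> P i j} = Sigma {..<m} (\<lambda>i. {j \<in> {..<m}. i < j \<and> P i j})" by auto
  then have "card {(i, j). i < j \<and> j < m \<and> P i j} = (\<Sum>i<m. card {j \<in> {..<m}. i < j \<and> P i j})"
    by (simp add: card_SigmaI)
  also have "\<dots> = (\<Sum>i<m. \<Sum>j<m. if i < j \<and> P i j then 1 else 0)"
    by (intro sum.cong refl card_filter_sum) simp
  finally show ?thesis .
qed

lemma inv_sum: "inv w = (\<Sum>i<length w. \<Sum>j<length w. if i < j \<and> w ! i > w ! j then 1 else 0)"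
  unfolding inv_def by (rule card_pairs)

lemma less_abs: "a \<noteq> 0 \<Longrightarrow> b \<noteq> 0 \<Longrightarrow> (a::int) > b \<longleftrightarrow> (a > 0 \<and> b < 0) \<or> (a > 0 \<and> b > 0 \<and> \<bar>b\<bar> < \<bar>a\<bar>) \<or> (a < 0 \<and> b < 0 \<and> \<bar>a\<bar> < \<bar>b\<bar>)"
  by auto

context setting
begin

definition Fs where "Fs = {i. i < n \<and> b ! i}"

lemma fin_Fs: "finite Fs" by (simp add: Fs_def)

lemma split_n: "{..<n} = Fs \<union> set (nf b)" "Fs \<inter> set (nf b) = {}"
  using nf_set[of b] lenb by (auto simp: Fs_def)

lemma sum_nf: "(\<Sum>i\<in>set (nf b). g i) = (\<Sum>j<k. g (nf b ! j))"
proof -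
  have "set (nf b) = (nth (nf b)) ` {..<k}" using nth_image[of k "nf b"] lennf by (simp add: atLeast0LessThan)
  moreover have "inj_on (nth (nf b)) {..<k}" using nf_eq_iff[of _ b] lennf by (auto simp: inj_on_def)
  ultimately show ?thesis by (simp add: sum.reindex)
qed

lemma sum_split_n: "(\<Sum>i<n. g i) = (\<Sum>i\<in>Fs. g i) + (\<Sum>j<k. g (nf b ! j))"
  unfolding split_n(1) sum_nf[symmetric] by (rule sum.union_disjoint) (auto simp: fin_Fs split_n(2))

lemma phi_gt: "j1 < k \<Longrightarrow> j2 < k \<Longrightarrow> phi b (s ! j1) > phi b (s ! j2) \<longleftrightarrow> s ! j1 > s ! j2"
  using less_abs[OF phi_nz phi_nz, of j1 j2] less_abs[OF s_nz s_nz, of j1 j2]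
    phi_neg[of j1] phi_neg[of j2] phi_pos[of j1] phi_pos[of j2] abs_phi_less[of j1 j2] abs_phi_less[of j2 j1]
  by (simp only:)

lemma NN: "(\<Sum>j<k. \<Sum>j'<k. if nf b ! j < nf b ! j' \<and> p ! (nf b ! j) > p ! (nf b ! j') then 1 else (0::nat)) = inv s"
  unfolding inv_sum lens
  by (intro sum.cong refl) (simp add: p_nf phi_gt nf_less_iff lennf)

definition Iv :: "nat \<Rightarrow> nat \<Rightarrow> nat" where "Iv i i' = (if i < i' \<and> p ! i > p ! i' then 1 else 0)"

lemma inv_p_split: "inv p = (\<Sum>f\<in>Fs. \<Sum>j'<k. Iv f (nf b ! j')) + (\<Sum>j<k. \<Sum>f\<in>Fs. Iv (nf b ! j) f) + inv s"
proof -
  have FF: "(\<Sum>f\<in>Fs. \<Sum>f'\<in>Fs. Iv f f') = 0"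
  proof -
    { fix f f' assume "f \<in> Fs" "f' \<in> Fs"
      then have "Iv f f' = 0" using p_F by (auto simp: Fs_def Iv_def) }
    then show ?thesis by simp
  qed
  have "inv p = (\<Sum>i<n. \<Sum>i'<n. Iv i i')" unfolding inv_sum len_p Iv_def ..
  also have "\<dots> = (\<Sum>i<n. (\<Sum>i'\<in>Fs. Iv i i') + (\<Sum>j'<k. Iv i (nf b ! j')))"
    by (intro sum.cong refl sum_split_n)
  also have "\<dots> = (\<Sum>i\<in>Fs. (\<Sum>i'\<in>Fs. Iv i i') + (\<Sum>j'<k. Iv i (nf b ! j')))
      + (\<Sum>j<k. (\<Sum>i'\<in>Fs. Iv (nf b ! j) i') + (\<Sum>j'<k. Iv (nf b ! j) (nf b ! j')))"
    by (rule sum_split_n)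
  also have "\<dots> = (\<Sum>f\<in>Fs. \<Sum>j'<k. Iv f (nf b ! j')) + (\<Sum>j<k. \<Sum>f\<in>Fs. Iv (nf b ! j) f)
      + (\<Sum>j<k. \<Sum>j'<k. Iv (nf b ! j) (nf b ! j'))"
    using FF by (simp add: sum.distrib)
  also have "(\<Sum>j<k. \<Sum>j'<k. Iv (nf b ! j) (nf b ! j')) = inv s"
    unfolding Iv_def by (rule NN)
  finally show ?thesis .
qed

definition NS :: "int list \<Rightarrow> nat" where
  "NS w = (\<Sum>i\<in>{i. i < length w \<and> w ! i < 0}. nat (- (w ! i)))"

lemma NS_sum: "NS w = (\<Sum>i<length w. if w ! i < 0 then nat (- (w ! i)) else 0)"
proof -
  have "{i. i < length w \<and> w ! i < 0} = {i \<in> {..<length w}. w ! i < 0}" by auto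
  then show ?thesis unfolding NS_def using sum.inter_filter[of "{..<length w}" "\<lambda>i. nat (- (w ! i))" "\<lambda>i. w ! i < 0"]
    by simp
qed

lemma ellB_NS: "ellB w = inv w + NS w" unfolding ellB_def NS_def ..

lemma NS_p: "NS p = (\<Sum>j<k. if s ! j < 0 then nf b ! c j + 1 else 0)"
proof -
  have "NS p = (\<Sum>i\<in>Fs. if p ! i < 0 then nat (- (p ! i)) else 0) + (\<Sum>j<k. if p ! (nf b ! j) < 0 then nat (- (p ! (nf b ! j))) else 0)"
    unfolding NS_sum len_p by (rule sum_split_n)
  also have "(\<Sum>i\<in>Fs. if p ! i < 0 then nat (- (p ! i)) else 0) = 0"
    using p_F by (auto simp: Fs_def intro!: sum.neutral)
  also have "(\<Sum>j<k. if p ! (nf b ! j) < 0 then nat (- (p ! (nf b ! j))) else 0) = (\<Sum>j<k. if s ! j < 0 then nf b ! c j + 1 else 0)"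
  proof (intro sum.cong refl)
    fix j assume j: "j \<in> {..<k}"
    then have j': "j < k" by simp
    show "(if p ! (nf b ! j) < 0 then nat (- (p ! (nf b ! j))) else 0) = (if s ! j < 0 then nf b ! c j + 1 else 0)"
      using p_nf[OF j'] phi_neg[OF j'] phi_s[OF j'] s_nz[OF j'] by auto
  qed
  finally show ?thesis by simp
qed

lemma NS_s: "NS s = (\<Sum>j<k. if s ! j < 0 then c j + 1 else 0)"
  unfolding NS_sum lens
proof (intro sum.cong refl)
  fix j assume "j \<in> {..<k}"
  then have j': "j < k" by simp
  show "(if s ! j < 0 then nat (- (s ! j)) else 0) = (if s ! j < 0 then c j + 1 else 0)"
    using c_abs[OF j'] by auto
qed

lemma rk_card: "rk b i = card {x. x < i \<and> \<not> b ! x}"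
  unfolding rk_def by (subst length_filter_conv_card) (auto intro: arg_cong[where f=card])

lemma nf_count: "j < k \<Longrightarrow> nf b ! j = j + card {f \<in> Fs. f < nf b ! j}"
proof -
  assume j: "j < k"
  have lt: "nf b ! j < n" using nf_elem[of j b] lennf lenb j by simp
  have "{..<nf b ! j} = {f \<in> Fs. f < nf b ! j} \<union> {x. x < nf b ! j \<and> \<not> b ! x}"
    using lt by (auto simp: Fs_def)
  then have "card {..<nf b ! j} = card {f \<in> Fs. f < nf b ! j} + card {x. x < nf b ! j \<and> \<not> b ! x}"
    by (rule ssubst) (rule card_Un_disjoint, auto simp: Fs_def)
  moreover have "card {x. x < nf b ! j \<and> \<not> b ! x} = j" using rk_card[of "nf b ! j"] rk_nf[of j b] j lennf by simp
  ultimately show ?thesis by simp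
qed

lemma T_even:
  assumes j: "j < k" and f: "f \<in> Fs"
  shows "even (Iv (nf b ! j) f + Iv f (nf b ! j) + (if s ! j < 0 \<and> f < nf b ! c j then 1 else 0)
               + (if f < nf b ! j then 1 else 0) + (if f < nf b ! c j then 1 else 0))"
proof -
  have fn: "f < n" "b ! f" using f by (auto simp: Fs_def)
  have pf: "p ! f = int f + 1" using p_F fn by simp
  have pj: "p ! (nf b ! j) = phi b (s ! j)" using p_nf[OF j] .
  have ne1: "f \<noteq> nf b ! j" using nf_elem[of j b] lennf j fn by auto
  have ne2: "f \<noteq> nf b ! c j" using nf_elem[of "c j" b] lennf c_lt[OF j] fn by auto
  show ?thesis
  proof (cases "s ! j > 0")
    case True
    then have ph: "phi b (s ! j) = int (nf b ! c j) + 1" using phi_s[OF j] by simp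
    show ?thesis using ne1 ne2 True unfolding Iv_def pf pj ph
      by (cases "f < nf b ! j"; cases "f < nf b ! c j") auto
  next
    case False
    then have neg: "s ! j < 0" using s_nz[OF j] by simp
    then have ph: "phi b (s ! j) = - (int (nf b ! c j) + 1)" using phi_s[OF j] by simp
    show ?thesis using ne1 ne2 neg unfolding Iv_def pf pj ph
      by (cases "f < nf b ! j"; cases "f < nf b ! c j") auto
  qed
qed

lemma parity: "even (ellB p + ellB s)"
proof -
  define NF where "NF = (\<Sum>j<k. \<Sum>f\<in>Fs. Iv (nf b ! j) f)"
  define FN where "FN = (\<Sum>j<k. \<Sum>f\<in>Fs. Iv f (nf b ! j))"
  define NG where "NG = (\<Sum>j<k. \<Sum>f\<in>Fs. if s ! j < 0 \<and> f < nf b ! c j then 1 else (0::nat))"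
  define R where "R = (\<Sum>j<k. \<Sum>f\<in>Fs. if f < nf b ! j then 1 else (0::nat))"
  define R' where "R' = (\<Sum>j<k. \<Sum>f\<in>Fs. if f < nf b ! c j then 1 else (0::nat))"
  define W where "W = (\<Sum>j<k. if s ! j < 0 then c j + 1 else (0::nat))"
  have RR: "R' = R" unfolding R'_def R_def
    using sum.reindex_bij_betw[OF c_bij, of "\<lambda>cc. \<Sum>f\<in>Fs. if f < nf b ! cc then 1 else (0::nat)"] by simp
  have ip: "inv p = FN + NF + inv s"
    unfolding inv_p_split FN_def NF_def by (simp add: sum.swap[of _ Fs])
  have nsp: "NS p = W + NG"
  proof -
    have "NS p = (\<Sum>j<k. (if s ! j < 0 then c j + 1 else 0) + (\<Sum>f\<in>Fs. if s ! j < 0 \<and> f < nf b ! c j then 1 else (0::nat)))"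
      unfolding NS_p
    proof (intro sum.cong refl)
      fix j assume "j \<in> {..<k}"
      then have j: "j < k" by simp
      have "nf b ! c j = c j + card {f \<in> Fs. f < nf b ! c j}" using nf_count[OF c_lt[OF j]] .
      moreover have "card {f \<in> Fs. f < nf b ! c j} = (\<Sum>f\<in>Fs. if f < nf b ! c j then 1 else 0)"
        by (rule card_filter_sum[OF fin_Fs])
      ultimately show "(if s ! j < 0 then nf b ! c j + 1 else 0) = (if s ! j < 0 then c j + 1 else 0) + (\<Sum>f\<in>Fs. if s ! j < 0 \<and> f < nf b ! c j then 1 else (0::nat))"
        by simp
    qed
    then show ?thesis unfolding W_def NG_def by (simp add: sum.distrib)
  qed
  have nss: "NS s = W" unfolding NS_s W_def ..
  have tot: "NF + FN + NG + R + R' = (\<Sum>j<k. \<Sum>f\<in>Fs. Iv (nf b ! j) f + Iv f (nf b ! j) + (if s ! j < 0 \<and> f < nf b ! c j then 1 else 0)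
               + (if f < nf b ! j then 1 else 0) + (if f < nf b ! c j then 1 else 0))"
    unfolding NF_def FN_def NG_def R_def R'_def by (simp add: sum.distrib)
  have "even (NF + FN + NG + R + R')" unfolding tot
    by (intro dvd_sum) (simp only: lessThan_iff T_even)
  moreover have "NF + FN + NG + R + R' = (NF + FN + NG) + 2 * R" using RR by simp
  ultimately have ev: "even (NF + FN + NG)" by (metis dvd_add_left_iff dvd_triv_left)
  have "ellB p + ellB s = (NF + FN + NG) + 2 * (inv s + W)"
    unfolding ellB_NS ip nsp nss by simp
  then show ?thesis using ev by simp
qed

lemma sign_eq: "(-1 :: 'a::ring_1) ^ ellB p = (-1) ^ ellB s"
proof -
  have "even (ellB p + ellB s)" by (rule parity)
  then show ?thesis by (cases "even (ellB s)") (auto simp: neg_one_even_power neg_one_odd_power)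
qed

lemma neg_p: "neg p = neg s"
proof -
  have "neg p = card {i. i < n \<and> p ! i < 0}" unfolding neg_def by (simp add: length_filter_conv_card len_p)
  also have "{i. i < n \<and> p ! i < 0} = nth (nf b) ` {j. j < k \<and> s ! j < 0}"
  proof (intro set_eqI iffI)
    fix i assume "i \<in> {i. i < n \<and> p ! i < 0}"
    then have i: "i < n" "p ! i < 0" by auto
    then have nb: "\<not> b ! i" using p_F by force
    then show "i \<in> nth (nf b) ` {j. j < k \<and> s ! j < 0}"
      using p_N[OF i(1) nb] i phi_neg by (auto simp: image_iff intro!: exI[of _ "rk b i"])
  next
    fix i assume "i \<in> nth (nf b) ` {j. j < k \<and> s ! j < 0}"
    then obtain j where j: "j < k" "s ! j < 0" "i = nf b ! j" by auto
    then show "i \<in> {i. i < n \<and> p ! i < 0}" using nf_elem[of j b] lennf lenb p_nf phi_neg by auto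
  qed
  also have "card \<dots> = card {j. j < k \<and> s ! j < 0}"
    by (rule card_image) (use nf_eq_iff[of _ b] lennf in \<open>auto simp: inj_on_def\<close>)
  also have "\<dots> = neg s" unfolding neg_def by (simp add: length_filter_conv_card lens)
  finally show ?thesis .
qed

end

definition eeG :: "int list \<Rightarrow> nat \<Rightarrow> nat \<Rightarrow> bool" where "eeG s k j = (j < k \<and> s ! j > int j + 1)"
definition ddG :: "int list \<Rightarrow> nat \<Rightarrow> nat \<Rightarrow> bool" where
  "ddG s k j = (if Suc j < k then precB (s ! Suc j) (s ! j) else eeG s k j)"

lemma (in setting) ee_eq: "ee = eeG s k" unfolding ee_def eeG_def by auto
lemma (in setting) dd_eq: "dd = ddG s k" unfolding dd_def ddG_def ee_eq by auto

theorem proposition3p6: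
  fixes n k :: nat and \<sigma> :: "int list"
  assumes "k \<le> n" and "\<sigma> \<in> DB k"
  shows "(\<Sum>\<pi>\<in>{\<pi> \<in> Bn n. dp \<pi> = \<sigma>}. (-1) ^ ellB \<pi> * [:0, 1:] ^ fmaj \<pi>)
         = (-1) ^ ellB \<sigma> * [:0, 1:] ^ fmaj \<sigma> * qbinom n k (([:0, 1:] :: int poly) ^ 2)"
proof -
  define X :: "int poly" where "X = [:0, 1:]"
  define B where "B = Bl k (n - k)"
  have setb: "\<And>b. b \<in> B \<Longrightarrow> setting \<sigma> k n b" using assms unfolding B_def by unfold_locales auto
  have img: "{\<pi> \<in> Bn n. dp \<pi> = \<sigma>} = build \<sigma> ` B"
  proof (intro set_eqI iffI)
    fix q assume "q \<in> {\<pi> \<in> Bn n. dp \<pi> = \<sigma>}"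
    then have "fm q \<in> B \<and> build \<sigma> (fm q) = q" using surj_build[OF assms(2) assms(1)] unfolding B_def by auto
    then show "q \<in> build \<sigma> ` B" by (metis image_eqI)
  next
    fix q assume "q \<in> build \<sigma> ` B"
    then obtain b where b: "b \<in> B" "q = build \<sigma> b" by auto
    interpret setting \<sigma> k n b using setb[OF b(1)] .
    show "q \<in> {\<pi> \<in> Bn n. dp \<pi> = \<sigma>}" using b p_in_Bn dp_p by simp
  qed
  have inj: "inj_on (build \<sigma>) B"
  proof (rule inj_onI)
    fix b1 b2 assume b: "b1 \<in> B" "b2 \<in> B" "build \<sigma> b1 = build \<sigma> b2"
    have "fm (build \<sigma> b1) = b1" using setting.fm_p[OF setb[OF b(1)]] .
    moreover have "fm (build \<sigma> b2) = b2" using setting.fm_p[OF setb[OF b(2)]] .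
    ultimately show "b1 = b2" using b(3) by metis
  qed
  have s0: "setting \<sigma> k k (replicate k False)"
    using assms by unfold_locales (auto simp: Bl_def rk_rep)
  have trm: "\<And>b. b \<in> B \<Longrightarrow> (-1) ^ ellB (build \<sigma> b) * X ^ fmaj (build \<sigma> b)
      = ((-1) ^ ellB \<sigma> * X ^ neg \<sigma>) * (X ^ 2) ^ Mabs (eeG \<sigma> k) (ddG \<sigma> k) b"
  proof -
    fix b assume b: "b \<in> B"
    interpret setting \<sigma> k n b using setb[OF b] .
    have "fmaj (build \<sigma> b) = 2 * Mabs (eeG \<sigma> k) (ddG \<sigma> k) b + neg \<sigma>"
      unfolding fmaj_def maj_p neg_p ee_eq dd_eq ..
    then show "(-1) ^ ellB (build \<sigma> b) * X ^ fmaj (build \<sigma> b)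
      = ((-1) ^ ellB \<sigma> * X ^ neg \<sigma>) * (X ^ 2) ^ Mabs (eeG \<sigma> k) (ddG \<sigma> k) b"
      using sign_eq[where 'a="int poly"] by (simp add: power_add power_mult)
  qed
  have C1: "\<forall>j. eeG \<sigma> k j \<and> \<not> eeG \<sigma> k (Suc j) \<longrightarrow> ddG \<sigma> k j"
    using setting.C1[OF s0] unfolding setting.ee_eq[OF s0] setting.dd_eq[OF s0] .
  have C2: "\<forall>j. \<not> eeG \<sigma> k j \<and> eeG \<sigma> k (Suc j) \<longrightarrow> \<not> ddG \<sigma> k j"
    using setting.C2[OF s0] unfolding setting.ee_eq[OF s0] setting.dd_eq[OF s0] .
  have ms: "majB \<sigma> = Mabs (eeG \<sigma> k) (ddG \<sigma> k) (replicate k False)"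
    using setting.maj_s[OF s0] unfolding setting.ee_eq[OF s0] setting.dd_eq[OF s0] .
  have qb: "qbinom n k (X ^ 2) = Gb k (n - k) (X ^ 2)"
    unfolding X_def by (intro qbinom_Gb[OF assms(1)]) (simp add: qfact_X2_nz)
  have "(\<Sum>\<pi>\<in>{\<pi> \<in> Bn n. dp \<pi> = \<sigma>}. (-1) ^ ellB \<pi> * X ^ fmaj \<pi>)
        = (\<Sum>b\<in>B. (-1) ^ ellB (build \<sigma> b) * X ^ fmaj (build \<sigma> b))"
    unfolding img by (rule sum.reindex[OF inj, unfolded comp_def])
  also have "\<dots> = (\<Sum>b\<in>B. ((-1) ^ ellB \<sigma> * X ^ neg \<sigma>) * (X ^ 2) ^ Mabs (eeG \<sigma> k) (ddG \<sigma> k) b)"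
    by (intro sum.cong refl trm)
  also have "\<dots> = ((-1) ^ ellB \<sigma> * X ^ neg \<sigma>) * (\<Sum>b\<in>B. (X ^ 2) ^ Mabs (eeG \<sigma> k) (ddG \<sigma> k) b)"
    by (simp add: sum_distrib_left)
  also have "(\<Sum>b\<in>B. (X ^ 2) ^ Mabs (eeG \<sigma> k) (ddG \<sigma> k) b) = (X ^ 2) ^ majB \<sigma> * Gb k (n - k) (X ^ 2)"
    unfolding B_def ms X_def by (rule X2.main_sum[OF C1 C2])
  also have "((-1) ^ ellB \<sigma> * X ^ neg \<sigma>) * ((X ^ 2) ^ majB \<sigma> * Gb k (n - k) (X ^ 2))
      = (-1) ^ ellB \<sigma> * X ^ fmaj \<sigma> * qbinom n k (X ^ 2)"
  proof -
    have "(X ^ 2) ^ majB \<sigma> = X ^ (2 * majB \<sigma>)" by (simp add: power_mult)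
    then show ?thesis unfolding qb fmaj_def by (simp add: power_add algebra_simps)
  qed
  finally show ?thesis unfolding X_def .
qed

end
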